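(* Let $\mathcal{R}$ be a multiset rewriting (MSR) system over a fact signature satisfying the protocol format assumptions described in the context, with $n$ protocol roles, and let $\mathcal{R}_{\mathsf{intf}}$ be its interface model (constructed as in the context). Then every filtered trace of $\mathcal{R}_{\mathsf{intf}}$ is a filtered trace of $\mathcal{R}$, i.e. $\mathrm{Tr}'(\mathcal{R}_{\mathsf{intf}}) \subseteq \mathrm{Tr}'(\mathcal{R})$.
   Context: Terms and messages. Fix a finite signature $\Sigma$ of function symbols, a set of names $\mathcal{N} = \mathit{fresh} \cup \mathit{pub}$ (fresh names and countably many public names) and a set of variables $\mathcal{V}$; terms are $\mathcal{T} = \mathcal{T}_\Sigma(\mathcal{N}\cup\mathcal{V})$, messages $\mathcal{M}$ are ground terms. An equational theory $\mathsf{E}$ induces the equality $=_\mathsf{E}$ (the least congruence containing $\mathsf{E}$, closed under substitution). Facts and MSR. A fact signature $\Sigma_{\mathsf{facts}} = \Sigma_{\mathsf{lin}} \uplus \Sigma_{\mathsf{per}}$ of fact symbols is partitioned into linear and persistent symbols; facts are $F(t_1,\dots,t_k)$ with $F$ of arity $k$ and $t_j \in \mathcal{T}$, partitioned accordingly into $\mathcal{F}_{\mathsf{lin}}\uplus\mathcal{F}_{\mathsf{per}}$. An MSR rule $l \xrightarrow{a} r$ has multisets of facts $l,a,r$; an MSR system is a finite set of rules. Its semantics is an LTS whose states are multisets of ground facts, with initial state the empty multiset, and with transition $S \xrightarrow{a'} (S \setminus^{\#} (l' \cap^{\#} \mathcal{F}_{\mathsf{lin}})) \cup^{\#} r'$ whenever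 $l \xrightarrow{a} r$ is a rule, $\theta$ is a ground instantiation of its variables, $l' \xrightarrow{a'} r' =_\mathsf{E} (l\xrightarrow{a} r)\theta$, $l' \cap^{\#} \mathcal{F}_{\mathsf{lin}} \subseteq^{\#} S$ and $\mathrm{set}(l') \cap \mathcal{F}_{\mathsf{per}} \subseteq \mathrm{set}(S)$ (here $\cup^\#,\setminus^\#,\subseteq^\#,\cap^\#$ are multiset operations, and $M\cap^\# X$ keeps the elements of $M$ lying in the set $X$ with their multiplicities). $\mathrm{Tr}(\mathcal{R})$ is the set of label sequences $\langle a_1,\dots,a_m\rangle$ of finite executions from the empty state, and $\mathrm{Tr}'(\mathcal{R})$ is obtained from $\mathrm{Tr}(\mathcal{R})$ by deleting all empty labels from each sequence. Reserved symbols: $\mathsf{K}\in\Sigma_{\mathsf{per}}$ (attacker knowledge) and $\mathsf{Fr},\mathsf{in},\mathsf{out}\in\Sigma_{\mathsf{lin}}$ (freshness, input, output). Format assumptions. The fact signature has the form $\Sigma_{\mathsf{facts}} = \Sigma_{\mathsf{act}} \uplus \Sigma_{\mathsf{env}} \uplus \biguplus_{1\le i\le n} \Sigma^i_{\mathsf{state}}$ (action, environment and role-$i$ state fact symbols). $\Sigma_{\mathsf{env}}$ contains disjoint subsets $\Sigma_{\mathsf{in}}$ and $\Sigma_{\mathsf{out}}$ with $\mathsf{Fr},\mathsf{in}\in\Sigma_{\mathsf{in}}$, $\mathsf{out}\in\Sigma_{\mathsf{out}}$, $\mathsf{K}\in\Sigma_{\mathsf{env}}\setminus(\Sigma_{\mathsf{in}}\cup\Sigma_{\mathsf{out}})$,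 and for each role $i$ a setup symbol $\mathsf{Setup}_i\in\Sigma_{\mathsf{in}}$. The rules are $\mathcal{R} = \mathcal{R}_{\mathsf{env}} \uplus \biguplus_{1\le i\le n}\mathcal{R}_i$ (pairwise disjoint), where $\mathcal{R}_{\mathsf{env}}$ contains the attacker's message deduction rules and the freshness rule $[] \xrightarrow{[\mathsf{Fr}(x)]} [\mathsf{Fr}(x)]$ for $x$ of fresh type. All rule labels use only symbols from $\Sigma_{\mathsf{act}}$. Every rule of $\mathcal{R}_{\mathsf{env}}$ uses only symbols from $\Sigma_{\mathsf{env}}$ in its premises and conclusions; a rule producing a $\mathsf{Setup}_i$ fact lies in $\mathcal{R}_{\mathsf{env}}$, produces no other fact and has empty label (these are the role setup rules). Every rule $l\xrightarrow{a} r\in\mathcal{R}_i$ satisfies: the symbols of $l$ lie in $\Sigma^i_{\mathsf{state}}\cup\Sigma_{\mathsf{in}}$, those of $r$ lie in $\Sigma^i_{\mathsf{state}}\cup\Sigma_{\mathsf{out}}$, $r$ contains at least one state fact, and there is $k_i\ge 1$ such that the first $k_i$ arguments of all state facts and $\mathsf{Setup}_i$ facts in the rule coincide, the first of them being a thread identifier $\mathit{rid}$ of fresh type. Interface model. Let $\Sigma_{\mathsf{in}}^- = \Sigma_{\mathsf{in}}\setminus\{\mathsf{Setup}_1,\dots,\mathsf{Setup}_n\}$. For each $F\in\Sigma^-_{\mathsf{in}}\cup\Sigma_{\mathsf{out}}$ and each role $i$ add a new "buffer" symbol $F_i$ (with one more argument, of the same linearity as $F$). $\mathcal{R}'_i$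 is obtained from $\mathcal{R}_i$ by replacing in every rule each fact $F(t_1,\dots,t_k)$ with $F\in\Sigma^-_{\mathsf{in}}\cup\Sigma_{\mathsf{out}}$ by $F_i(\mathit{rid},t_1,\dots,t_k)$, where $\mathit{rid}$ is the rule's thread identifier. $\mathcal{R}_{\mathsf{io}}$ consists, for each role $i$, of the rules $[F(x_1,\dots,x_k)]\xrightarrow{[]}[F_i(\mathit{rid},x_1,\dots,x_k)]$ for $F\in\Sigma^-_{\mathsf{in}}$ and $[G_i(\mathit{rid},x_1,\dots,x_k)]\xrightarrow{[]}[G(x_1,\dots,x_k)]$ for $G\in\Sigma_{\mathsf{out}}$, together with all role setup rules, which are removed from $\mathcal{R}_{\mathsf{env}}$; the remaining environment rules form $\mathcal{R}^-_{\mathsf{env}}$. Finally $\mathcal{R}_{\mathsf{intf}} = \mathcal{R}^-_{\mathsf{env}}\uplus\mathcal{R}_{\mathsf{io}}\uplus\biguplus_i \mathcal{R}'_i$. *)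

theory Defs
  imports Main "HOL-Library.Multiset"
begin

datatype vsort = SFresh | SPub | SMsg

datatype ('f,'n,'v) trm = Var vsort 'v | FreshN 'n | PubN 'n | App 'f "('f,'n,'v) trm list"

type_synonym ('f,'n,'v) subst = "vsort \<Rightarrow> 'v \<Rightarrow> ('f,'n,'v) trm"

primrec subst :: "('f,'n,'v) subst \<Rightarrow> ('f,'n,'v) trm \<Rightarrow> ('f,'n,'v) trm" where
  "subst \<sigma> (Var s v) = \<sigma> s v"
| "subst \<sigma> (FreshN a) = FreshN a"
| "subst \<sigma> (PubN a) = PubN a"
| "subst \<sigma> (App f ts) = App f (map (subst \<sigma>) ts)"

primrec ground :: "('f,'n,'v) trm \<Rightarrow> bool" where
  "ground (Var s v) = False"
| "ground (FreshN a) = True"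
| "ground (PubN a) = True"
| "ground (App f ts) = list_all ground ts"

inductive eqE :: "(('f,'n,'v) trm \<times> ('f,'n,'v) trm) set \<Rightarrow> ('f,'n,'v) trm \<Rightarrow> ('f,'n,'v) trm \<Rightarrow> bool"
  for E where
  eqE_ax: "(s, t) \<in> E \<Longrightarrow> eqE E (subst \<sigma> s) (subst \<sigma> t)"
| eqE_refl: "eqE E t t"
| eqE_sym: "eqE E s t \<Longrightarrow> eqE E t s"
| eqE_trans: "eqE E s t \<Longrightarrow> eqE E t u \<Longrightarrow> eqE E s u"
| eqE_cong: "list_all2 (eqE E) ss ts \<Longrightarrow> eqE E (App f ss) (App f ts)"

definition ground_inst :: "('f,'n,'v) subst \<Rightarrow> bool" where
  "ground_inst \<theta> \<longleftrightarrow> (\<forall>s v. ground (\<theta> s v)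
      \<and> (s = SFresh \<longrightarrow> (\<exists>a. \<theta> s v = FreshN a))
      \<and> (s = SPub \<longrightarrow> (\<exists>a. \<theta> s v = PubN a)))"

datatype ('s,'f,'n,'v) fact = Fact (fsym: 's) (fargs: "('f,'n,'v) trm list")

datatype ('s,'f,'n,'v) rule =
  Rule (prems: "('s,'f,'n,'v) fact multiset") (acts: "('s,'f,'n,'v) fact multiset")
       (concs: "('s,'f,'n,'v) fact multiset")

definition ground_fact :: "('s,'f,'n,'v) fact \<Rightarrow> bool" where
  "ground_fact f \<longleftrightarrow> (\<forall>t\<in>set (fargs f). ground t)"

definition ground_mset :: "('s,'f,'n,'v) fact multiset \<Rightarrow> bool" where
  "ground_mset M \<longleftrightarrow> (\<forall>f\<in>#M. ground_fact f)"

definition subst_fact :: "('f,'n,'v) subst \<Rightarrow> ('s,'f,'n,'v) fact \<Rightarrow> ('s,'f,'n,'v) fact" where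
  "subst_fact \<theta> f = Fact (fsym f) (map (subst \<theta>) (fargs f))"

definition subst_mset :: "('f,'n,'v) subst \<Rightarrow> ('s,'f,'n,'v) fact multiset \<Rightarrow> ('s,'f,'n,'v) fact multiset" where
  "subst_mset \<theta> M = image_mset (subst_fact \<theta>) M"

definition eqE_fact :: "(('f,'n,'v) trm \<times> ('f,'n,'v) trm) set \<Rightarrow> ('s,'f,'n,'v) fact \<Rightarrow> ('s,'f,'n,'v) fact \<Rightarrow> bool" where
  "eqE_fact E f g \<longleftrightarrow> fsym f = fsym g \<and> list_all2 (eqE E) (fargs f) (fargs g)"

definition eqE_mset :: "(('f,'n,'v) trm \<times> ('f,'n,'v) trm) set \<Rightarrow> ('s,'f,'n,'v) fact multiset \<Rightarrow> ('s,'f,'n,'v) fact multiset \<Rightarrow> bool" where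
  "eqE_mset E M N \<longleftrightarrow> rel_mset (eqE_fact E) M N"

definition lin_part :: "('s \<Rightarrow> bool) \<Rightarrow> ('s,'f,'n,'v) fact multiset \<Rightarrow> ('s,'f,'n,'v) fact multiset" where
  "lin_part per M = filter_mset (\<lambda>f. \<not> per (fsym f)) M"

definition per_part :: "('s \<Rightarrow> bool) \<Rightarrow> ('s,'f,'n,'v) fact multiset \<Rightarrow> ('s,'f,'n,'v) fact multiset" where
  "per_part per M = filter_mset (\<lambda>f. per (fsym f)) M"

definition msr_step ::
  "('s \<Rightarrow> bool) \<Rightarrow> (('f,'n,'v) trm \<times> ('f,'n,'v) trm) set \<Rightarrow> ('s,'f,'n,'v) rule set
   \<Rightarrow> ('s,'f,'n,'v) fact multiset \<Rightarrow> ('s,'f,'n,'v) fact multiset \<Rightarrow> ('s,'f,'n,'v) fact multiset \<Rightarrow> bool" where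
  "msr_step per E R S a' S' \<longleftrightarrow>
     (\<exists>r\<in>R. \<exists>\<theta> l' r'. ground_inst \<theta> \<and>
        ground_mset l' \<and> ground_mset a' \<and> ground_mset r' \<and>
        eqE_mset E l' (subst_mset \<theta> (prems r)) \<and>
        eqE_mset E a' (subst_mset \<theta> (acts r)) \<and>
        eqE_mset E r' (subst_mset \<theta> (concs r)) \<and>
        lin_part per l' \<subseteq># S \<and>
        set_mset (per_part per l') \<subseteq> set_mset S \<and>
        S' = (S - lin_part per l') + r')"

inductive msr_run ::
  "('s \<Rightarrow> bool) \<Rightarrow> (('f,'n,'v) trm \<times> ('f,'n,'v) trm) set \<Rightarrow> ('s,'f,'n,'v) rule set
   \<Rightarrow> ('s,'f,'n,'v) fact multiset \<Rightarrow> ('s,'f,'n,'v) fact multiset list \<Rightarrow> bool"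
  for per E R where
  run_empty: "msr_run per E R {#} []"
| run_step: "msr_run per E R S tr \<Longrightarrow> msr_step per E R S a S' \<Longrightarrow> msr_run per E R S' (tr @ [a])"

definition Tr :: "('s \<Rightarrow> bool) \<Rightarrow> (('f,'n,'v) trm \<times> ('f,'n,'v) trm) set \<Rightarrow> ('s,'f,'n,'v) rule set
   \<Rightarrow> ('s,'f,'n,'v) fact multiset list set" where
  "Tr per E R = {tr. \<exists>S. msr_run per E R S tr}"

definition Tr' :: "('s \<Rightarrow> bool) \<Rightarrow> (('f,'n,'v) trm \<times> ('f,'n,'v) trm) set \<Rightarrow> ('s,'f,'n,'v) rule set
   \<Rightarrow> ('s,'f,'n,'v) fact multiset list set" where
  "Tr' per E R = (\<lambda>tr. filter (\<lambda>a. a \<noteq> {#}) tr) ` Tr per E R"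

record 's fsig =
  persistent :: "'s \<Rightarrow> bool"
  Sact :: "'s set"
  Senv :: "'s set"
  Sstate :: "nat \<Rightarrow> 's set"
  Sin :: "'s set"
  Sout :: "'s set"
  symK :: 's
  symFr :: 's
  symIn :: 's
  symOut :: 's
  symSetup :: "nat \<Rightarrow> 's"

definition syms :: "('s,'f,'n,'v) fact multiset \<Rightarrow> 's set" where
  "syms M = fsym ` set_mset M"

definition fresh_rule :: "'s \<Rightarrow> 'v \<Rightarrow> ('s,'f,'n,'v) rule" where
  "fresh_rule Fr x = Rule {#} {#Fact Fr [Var SFresh x]#} {#Fact Fr [Var SFresh x]#}"

definition is_fresh_rule :: "'s \<Rightarrow> ('s,'f,'n,'v) rule \<Rightarrow> bool" where
  "is_fresh_rule Fr r \<longleftrightarrow> (\<exists>x. r = fresh_rule Fr x)"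

definition produces_setup :: "'s fsig \<Rightarrow> nat \<Rightarrow> ('s,'f,'n,'v) rule \<Rightarrow> bool" where
  "produces_setup \<Sigma> n r \<longleftrightarrow> (\<exists>i\<in>{1..n}. symSetup \<Sigma> i \<in> syms (concs r))"

definition protocol_format ::
  "'s fsig \<Rightarrow> nat \<Rightarrow> ('s,'f,'n,'v) rule set \<Rightarrow> (nat \<Rightarrow> ('s,'f,'n,'v) rule set) \<Rightarrow> bool" where
  "protocol_format \<Sigma> n Renv Rrole \<longleftrightarrow>
    \<comment> \<open>the fact signature\<close>
    UNIV = Sact \<Sigma> \<union> Senv \<Sigma> \<union> (\<Union>i\<in>{1..n}. Sstate \<Sigma> i) \<and>
    Sact \<Sigma> \<inter> Senv \<Sigma> = {} \<and>
    (\<forall>i\<in>{1..n}. Sact \<Sigma> \<inter> Sstate \<Sigma> i = {} \<and> Senv \<Sigma> \<inter> Sstate \<Sigma> i = {}) \<and>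
    (\<forall>i\<in>{1..n}. \<forall>j\<in>{1..n}. i \<noteq> j \<longrightarrow> Sstate \<Sigma> i \<inter> Sstate \<Sigma> j = {}) \<and>
    Sin \<Sigma> \<subseteq> Senv \<Sigma> \<and> Sout \<Sigma> \<subseteq> Senv \<Sigma> \<and> Sin \<Sigma> \<inter> Sout \<Sigma> = {} \<and>
    symFr \<Sigma> \<in> Sin \<Sigma> \<and> symIn \<Sigma> \<in> Sin \<Sigma> \<and> symOut \<Sigma> \<in> Sout \<Sigma> \<and>
    symK \<Sigma> \<in> Senv \<Sigma> - (Sin \<Sigma> \<union> Sout \<Sigma>) \<and>
    persistent \<Sigma> (symK \<Sigma>) \<and> \<not> persistent \<Sigma> (symFr \<Sigma>) \<and>
    \<not> persistent \<Sigma> (symIn \<Sigma>) \<and> \<not> persistent \<Sigma> (symOut \<Sigma>) \<and>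
    inj_on (symSetup \<Sigma>) {1..n} \<and> symSetup \<Sigma> ` {1..n} \<subseteq> Sin \<Sigma> \<and>
    \<comment> \<open>the rules: finite, pairwise disjoint parts\<close>
    finite Renv \<and> (\<forall>i\<in>{1..n}. finite (Rrole i)) \<and>
    (\<forall>i\<in>{1..n}. Renv \<inter> Rrole i = {}) \<and>
    (\<forall>i\<in>{1..n}. \<forall>j\<in>{1..n}. i \<noteq> j \<longrightarrow> Rrole i \<inter> Rrole j = {}) \<and>
    \<comment> \<open>freshness rule\<close>
    (\<exists>x. fresh_rule (symFr \<Sigma>) x \<in> Renv) \<and>
    \<comment> \<open>labels use action symbols (the freshness rule, whose label is Fr(x), excepted)\<close>
    (\<forall>r \<in> Renv \<union> (\<Union>i\<in>{1..n}. Rrole i).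
        \<not> is_fresh_rule (symFr \<Sigma>) r \<longrightarrow> syms (acts r) \<subseteq> Sact \<Sigma>) \<and>
    \<comment> \<open>environment rules\<close>
    (\<forall>r\<in>Renv. syms (prems r) \<subseteq> Senv \<Sigma> \<and> syms (concs r) \<subseteq> Senv \<Sigma>) \<and>
    \<comment> \<open>setup rules\<close>
    (\<forall>r \<in> Renv \<union> (\<Union>i\<in>{1..n}. Rrole i). produces_setup \<Sigma> n r \<longrightarrow>
        r \<in> Renv \<and> size (concs r) = 1 \<and> acts r = {#}) \<and>
    \<comment> \<open>role rules\<close>
    (\<forall>i\<in>{1..n}. \<exists>k\<ge>1. \<forall>r\<in>Rrole i.
        syms (prems r) \<subseteq> Sstate \<Sigma> i \<union> Sin \<Sigma> \<and>
        syms (concs r) \<subseteq> Sstate \<Sigma> i \<union> Sout \<Sigma> \<and>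
        (\<exists>f\<in>#concs r. fsym f \<in> Sstate \<Sigma> i) \<and>
        (\<exists>ts rid. length ts = k \<and> ts ! 0 = Var SFresh rid \<and>
           (\<forall>f\<in>#prems r + concs r. fsym f \<in> Sstate \<Sigma> i \<union> {symSetup \<Sigma> i} \<longrightarrow>
               take k (fargs f) = ts)))"

datatype 's isym = Base 's | Buf 's nat

primrec ipersistent :: "('s \<Rightarrow> bool) \<Rightarrow> 's isym \<Rightarrow> bool" where
  "ipersistent per (Base F) = per F"
| "ipersistent per (Buf F i) = per F"

definition lift_fact :: "('s,'f,'n,'v) fact \<Rightarrow> ('s isym,'f,'n,'v) fact" where
  "lift_fact f = Fact (Base (fsym f)) (fargs f)"

definition lift_rule :: "('s,'f,'n,'v) rule \<Rightarrow> ('s isym,'f,'n,'v) rule" where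
  "lift_rule r = Rule (image_mset lift_fact (prems r)) (image_mset lift_fact (acts r))
                      (image_mset lift_fact (concs r))"

definition Sin_minus :: "'s fsig \<Rightarrow> nat \<Rightarrow> 's set" where
  "Sin_minus \<Sigma> n = Sin \<Sigma> - symSetup \<Sigma> ` {1..n}"

definition thread_id :: "'s fsig \<Rightarrow> nat \<Rightarrow> ('s,'f,'n,'v) rule \<Rightarrow> ('f,'n,'v) trm" where
  "thread_id \<Sigma> i r = hd (fargs (SOME f. f \<in># concs r \<and> fsym f \<in> Sstate \<Sigma> i))"

definition buf_fact :: "'s fsig \<Rightarrow> nat \<Rightarrow> nat \<Rightarrow> ('f,'n,'v) trm \<Rightarrow> ('s,'f,'n,'v) fact \<Rightarrow> ('s isym,'f,'n,'v) fact" where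
  "buf_fact \<Sigma> n i rid f =
     (if fsym f \<in> Sin_minus \<Sigma> n \<union> Sout \<Sigma> then Fact (Buf (fsym f) i) (rid # fargs f)
      else lift_fact f)"

definition buf_rule :: "'s fsig \<Rightarrow> nat \<Rightarrow> nat \<Rightarrow> ('s,'f,'n,'v) rule \<Rightarrow> ('s isym,'f,'n,'v) rule" where
  "buf_rule \<Sigma> n i r =
     (let rid = thread_id \<Sigma> i r in
      Rule (image_mset (buf_fact \<Sigma> n i rid) (prems r)) (image_mset (buf_fact \<Sigma> n i rid) (acts r))
           (image_mset (buf_fact \<Sigma> n i rid) (concs r)))"

definition Rrole_intf :: "'s fsig \<Rightarrow> nat \<Rightarrow> (nat \<Rightarrow> ('s,'f,'n,'v) rule set) \<Rightarrow> nat \<Rightarrow> ('s isym,'f,'n,'v) rule set" where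
  "Rrole_intf \<Sigma> n Rrole i = buf_rule \<Sigma> n i ` Rrole i"

definition io_rules :: "'s fsig \<Rightarrow> nat \<Rightarrow> nat \<Rightarrow> ('s isym,'f,'n,'v) rule set" where
  "io_rules \<Sigma> n i =
     {Rule {#Fact (Base F) (map (Var SMsg) xs)#} {#} {#Fact (Buf F i) (Var SFresh rid # map (Var SMsg) xs)#}
        | F xs rid. F \<in> Sin_minus \<Sigma> n \<and> distinct xs}
   \<union> {Rule {#Fact (Buf G i) (Var SFresh rid # map (Var SMsg) xs)#} {#} {#Fact (Base G) (map (Var SMsg) xs)#}
        | G xs rid. G \<in> Sout \<Sigma> \<and> distinct xs}"

definition setup_rules :: "'s fsig \<Rightarrow> nat \<Rightarrow> ('s,'f,'n,'v) rule set \<Rightarrow> ('s,'f,'n,'v) rule set" where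
  "setup_rules \<Sigma> n Renv = {r\<in>Renv. produces_setup \<Sigma> n r}"

definition R_io :: "'s fsig \<Rightarrow> nat \<Rightarrow> ('s,'f,'n,'v) rule set \<Rightarrow> ('s isym,'f,'n,'v) rule set" where
  "R_io \<Sigma> n Renv = (\<Union>i\<in>{1..n}. io_rules \<Sigma> n i) \<union> lift_rule ` setup_rules \<Sigma> n Renv"

definition R_intf :: "'s fsig \<Rightarrow> nat \<Rightarrow> ('s,'f,'n,'v) rule set \<Rightarrow> (nat \<Rightarrow> ('s,'f,'n,'v) rule set) \<Rightarrow> ('s isym,'f,'n,'v) rule set" where
  "R_intf \<Sigma> n Renv Rrole =
     lift_rule ` (Renv - setup_rules \<Sigma> n Renv) \<union> R_io \<Sigma> n Renv \<union> (\<Union>i\<in>{1..n}. Rrole_intf \<Sigma> n Rrole i)"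

definition R_orig :: "nat \<Rightarrow> ('s,'f,'n,'v) rule set \<Rightarrow> (nat \<Rightarrow> ('s,'f,'n,'v) rule set) \<Rightarrow> ('s,'f,'n,'v) rule set" where
  "R_orig n Renv Rrole = Renv \<union> (\<Union>i\<in>{1..n}. Rrole i)"

end

theory Submission imports Defs begin

definition unbuf :: "('s isym,'f,'n,'v) fact \<Rightarrow> ('s,'f,'n,'v) fact" where
  "unbuf f = (case fsym f of Base F \<Rightarrow> Fact F (fargs f) | Buf F i \<Rightarrow> Fact F (tl (fargs f)))"

definition canon :: "(('f,'n,'v) trm \<times> ('f,'n,'v) trm) set \<Rightarrow> ('s,'f,'n,'v) fact \<Rightarrow> ('s,'f,'n,'v) fact" where
  "canon E f = (if \<exists>g. ground_fact g \<and> eqE_fact E g f then SOME g. ground_fact g \<and> eqE_fact E g f else f)"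

lemma eqE_fact_refl: "eqE_fact E f f"
  by (simp add: eqE_fact_def list_all2_refl eqE_refl)

lemma eqE_fact_sym: "eqE_fact E f g \<Longrightarrow> eqE_fact E g f"
  unfolding eqE_fact_def by (auto simp: list_all2_conv_all_nth intro: eqE_sym)

lemma eqE_fact_trans: "eqE_fact E f g \<Longrightarrow> eqE_fact E g h \<Longrightarrow> eqE_fact E f h"
proof -
  assume a: "eqE_fact E f g" "eqE_fact E g h"
  have "list_all2 (eqE E) (fargs f) (fargs h)"
    using list_all2_trans[of "eqE E" "eqE E" "eqE E", OF eqE.eqE_trans] a by (auto simp: eqE_fact_def)
  then show ?thesis using a by (simp add: eqE_fact_def)
qed

lemma canon_eq: "eqE_fact E (canon E f) f"
proof (cases "\<exists>g. ground_fact g \<and> eqE_fact E g f")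
  case True
  then show ?thesis unfolding canon_def using someI_ex[OF True] by simp
next
  case False
  then have "canon E f = f" unfolding canon_def by auto
  then show ?thesis by (simp add: eqE_fact_refl)
qed

lemma canon_fsym: "fsym (canon E f) = fsym f"
  using canon_eq[of E f] by (simp add: eqE_fact_def)

lemma canon_ground: "ground_fact f \<Longrightarrow> ground_fact (canon E f)"
proof -
  assume g: "ground_fact f"
  then have ex: "\<exists>g. ground_fact g \<and> eqE_fact E g f" using eqE_fact_refl by blast
  show ?thesis unfolding canon_def using someI_ex[OF ex] ex by simp
qed

lemma canon_cong: "eqE_fact E f f' \<Longrightarrow> ground_fact f \<Longrightarrow> canon E f = canon E f'"
proof -
  assume e: "eqE_fact E f f'" and gf: "ground_fact f"
  have "(\<lambda>g. ground_fact g \<and> eqE_fact E g f) = (\<lambda>g. ground_fact g \<and> eqE_fact E g f')"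
    using e by (auto intro: eqE_fact_trans eqE_fact_sym)
  moreover have "\<exists>g. ground_fact g \<and> eqE_fact E g f" using gf eqE_fact_refl by blast
  ultimately show ?thesis unfolding canon_def by simp
qed

lemma unbuf_eqE: "eqE_fact E f g \<Longrightarrow> eqE_fact E (unbuf f) (unbuf g)"
proof -
  assume a: "eqE_fact E f g"
  then have s: "fsym f = fsym g" and l: "list_all2 (eqE E) (fargs f) (fargs g)"
    by (auto simp: eqE_fact_def)
  have "list_all2 (eqE E) (tl (fargs f)) (tl (fargs g))"
    using l by (cases "fargs f"; cases "fargs g") auto
  then show ?thesis using s l unfolding eqE_fact_def unbuf_def by (auto split: isym.splits)
qed

lemma unbuf_ground: "ground_fact f \<Longrightarrow> ground_fact (unbuf f)"
proof -
  assume "ground_fact f"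
  moreover have "set (tl (fargs f)) \<subseteq> set (fargs f)" by (cases "fargs f") auto
  ultimately show ?thesis unfolding ground_fact_def unbuf_def by (auto split: isym.splits)
qed

lemma ip_unbuf: "per (fsym (unbuf f)) = ipersistent per (fsym f)"
  unfolding unbuf_def by (auto split: isym.splits)

definition good :: "(('s,'f,'n,'v) fact \<Rightarrow> ('s isym,'f,'n,'v) fact) \<Rightarrow> bool" where
  "good h \<longleftrightarrow> (\<forall>\<theta> g. unbuf (subst_fact \<theta> (h g)) = subst_fact \<theta> g)"

lemma good_lift: "good lift_fact"
  by (simp add: good_def unbuf_def lift_fact_def subst_fact_def)

lemma good_buf: "good (buf_fact \<Sigma> n i rid)"
  by (simp add: good_def unbuf_def lift_fact_def subst_fact_def buf_fact_def)

lemma rel_mset_elem: "rel_mset R A B \<Longrightarrow> x \<in># A \<Longrightarrow> \<exists>y\<in>#B. R x y"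
  by (induct rule: rel_mset_induct) auto

lemma rel_transfer:
  assumes "rel_mset R A (image_mset g B)" "\<And>x y. R x (g y) \<Longrightarrow> Q (k x) y"
  shows "rel_mset Q (image_mset k A) B"
  using assms(1) unfolding multiset.rel_map
  by (rule multiset.rel_mono_strong) (use assms(2) in auto)


definition CC :: "(('f,'n,'v) trm \<times> ('f,'n,'v) trm) set \<Rightarrow> ('s isym,'f,'n,'v) fact multiset \<Rightarrow> ('s,'f,'n,'v) fact multiset" where
  "CC E M = image_mset (canon E \<circ> unbuf) M"

lemma fsym_cu: "per (fsym ((canon E \<circ> unbuf) f)) = ipersistent per (fsym f)"
  by (simp add: canon_fsym ip_unbuf)

lemma lin_CC: "lin_part per (CC E M) = CC E (lin_part (ipersistent per) M)"
  unfolding lin_part_def CC_def filter_mset_image_mset by (simp add: fsym_cu del: comp_apply)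

lemma per_CC: "per_part per (CC E M) = CC E (per_part (ipersistent per) M)"
  unfolding per_part_def CC_def filter_mset_image_mset by (simp add: fsym_cu del: comp_apply)

lemma lin_lin: "lin_part p (lin_part p M) = lin_part p M"
  unfolding lin_part_def by (simp add: filter_filter_mset)

lemma per_lin: "per_part p (lin_part p M) = {#}"
  unfolding lin_part_def per_part_def by (simp add: filter_filter_mset)

lemma lin_plus: "lin_part p (M + N) = lin_part p M + lin_part p N"
  unfolding lin_part_def by simp
lemma lin_minus: "lin_part p (M - N) = lin_part p M - lin_part p N"
  unfolding lin_part_def by simp
lemma per_plus: "per_part p (M + N) = per_part p M + per_part p N"
  unfolding per_part_def by simp
lemma per_minus: "per_part p (M - N) = per_part p M - per_part p N"
  unfolding per_part_def by simp

definition Rel :: "('s \<Rightarrow> bool) \<Rightarrow> (('f,'n,'v) trm \<times> ('f,'n,'v) trm) set \<Rightarrow> ('s isym,'f,'n,'v) fact multiset \<Rightarrow> ('s,'f,'n,'v) fact multiset \<Rightarrow> bool" where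
  "Rel per E S So \<longleftrightarrow> lin_part per So = CC E (lin_part (ipersistent per) S)
     \<and> set_mset (per_part per So) = set_mset (CC E (per_part (ipersistent per) S)) \<and> ground_mset S"

lemma transfer_fact:
  assumes "good h" "eqE_fact E x (subst_fact \<theta> (h y))"
  shows "eqE_fact E ((canon E \<circ> unbuf) x) (subst_fact \<theta> y)"
proof -
  have "eqE_fact E (unbuf x) (unbuf (subst_fact \<theta> (h y)))" using assms(2) by (rule unbuf_eqE)
  then have "eqE_fact E (unbuf x) (subst_fact \<theta> y)" using assms(1) by (simp add: good_def)
  then show ?thesis using canon_eq eqE_fact_trans by (metis comp_apply)
qed

lemma transfer_mset:
  assumes "good h" "eqE_mset E l (subst_mset \<theta> (image_mset h P))"
  shows "eqE_mset E (CC E l) (subst_mset \<theta> P)"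
proof -
  have "rel_mset (eqE_fact E) l (image_mset (subst_fact \<theta> \<circ> h) P)"
    using assms(2) by (simp add: eqE_mset_def subst_mset_def image_mset.compositionality)
  then have "rel_mset (\<lambda>x y. eqE_fact E x (subst_fact \<theta> y)) (image_mset (canon E \<circ> unbuf) l) P"
    by (rule rel_transfer) (use transfer_fact[OF assms(1)] in auto)
  then have "rel_mset (eqE_fact E) (image_mset (canon E \<circ> unbuf) l) (image_mset (subst_fact \<theta>) P)"
    unfolding multiset.rel_map .
  then show ?thesis unfolding eqE_mset_def subst_mset_def CC_def
    by (rule multiset.rel_mono_strong) auto
qed

lemma transfer_acts:
  assumes "eqE_mset E a (subst_mset \<theta> (image_mset lift_fact P))"
  shows "eqE_mset E (image_mset unbuf a) (subst_mset \<theta> P)"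
proof -
  have "rel_mset (eqE_fact E) a (image_mset (subst_fact \<theta> \<circ> lift_fact) P)"
    using assms by (simp add: eqE_mset_def subst_mset_def image_mset.compositionality)
  then have "rel_mset (\<lambda>x y. eqE_fact E x (subst_fact \<theta> y)) (image_mset unbuf a) P"
    by (rule rel_transfer) (metis comp_apply good_lift good_def unbuf_eqE)
  then have "rel_mset (eqE_fact E) (image_mset unbuf a) (image_mset (subst_fact \<theta>) P)"
    unfolding multiset.rel_map .
  then show ?thesis unfolding eqE_mset_def subst_mset_def
    by (rule multiset.rel_mono_strong) auto
qed

lemma acts_lift:
  assumes "eqE_mset E a (subst_mset \<theta> (image_mset lift_fact P))"
  shows "image_mset lift_fact (image_mset unbuf a) = a"
proof -
  have "lift_fact (unbuf f) = f" if fin: "f \<in># a" for f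
  proof -
    obtain y where "y \<in># subst_mset \<theta> (image_mset lift_fact P)" "eqE_fact E f y"
      using rel_mset_elem[OF assms[unfolded eqE_mset_def] fin] by blast
    then obtain F where "fsym f = Base F"
      by (auto simp: subst_mset_def subst_fact_def lift_fact_def eqE_fact_def)
    then show ?thesis by (cases f) (simp add: lift_fact_def unbuf_def)
  qed
  then have "image_mset (lift_fact \<circ> unbuf) a = image_mset id a" by (intro image_mset_cong) auto
  then show ?thesis by (simp add: image_mset.compositionality)
qed

lemma ground_CC: "ground_mset M \<Longrightarrow> ground_mset (CC E M)"
  unfolding ground_mset_def CC_def by (auto intro: canon_ground unbuf_ground)

lemma ground_unbuf: "ground_mset M \<Longrightarrow> ground_mset (image_mset unbuf M)"
  unfolding ground_mset_def by (auto intro: unbuf_ground)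


lemma sim_rule:
  fixes per :: "'s \<Rightarrow> bool"
  assumes r0: "r0 \<in> RO" and gh: "good h"
    and pr: "prems r = image_mset h (prems r0)" and cr: "concs r = image_mset h (concs r0)"
    and ar: "acts r = image_mset lift_fact (acts r0)"
    and gi: "ground_inst \<theta>" and gl: "ground_mset l'" and ga: "ground_mset a'" and gr: "ground_mset r'"
    and el: "eqE_mset E l' (subst_mset \<theta> (prems r))"
    and ea: "eqE_mset E a' (subst_mset \<theta> (acts r))"
    and er: "eqE_mset E r' (subst_mset \<theta> (concs r))"
    and sub: "lin_part (ipersistent per) l' \<subseteq># S"
    and psub: "set_mset (per_part (ipersistent per) l') \<subseteq> set_mset S"
    and rel: "Rel per E S So"
  shows "msr_step per E RO So (image_mset unbuf a') (So - lin_part per (CC E l') + CC E r')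
     \<and> Rel per E (S - lin_part (ipersistent per) l' + r') (So - lin_part per (CC E l') + CC E r')
     \<and> image_mset lift_fact (image_mset unbuf a') = a'"
proof -
  let ?ip = "ipersistent per"
  have lS: "lin_part per So = CC E (lin_part ?ip S)" and pS: "set_mset (per_part per So) = set_mset (CC E (per_part ?ip S))"
    and gS: "ground_mset S" using rel by (auto simp: Rel_def)
  have el0: "eqE_mset E (CC E l') (subst_mset \<theta> (prems r0))"
    using transfer_mset[OF gh el[unfolded pr]] .
  have er0: "eqE_mset E (CC E r') (subst_mset \<theta> (concs r0))"
    using transfer_mset[OF gh er[unfolded cr]] .
  have ea0: "eqE_mset E (image_mset unbuf a') (subst_mset \<theta> (acts r0))"
    using transfer_acts[OF ea[unfolded ar]] .
  have lift: "image_mset lift_fact (image_mset unbuf a') = a'"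
    using acts_lift[OF ea[unfolded ar]] .
  have ll: "lin_part ?ip l' \<subseteq># lin_part ?ip S"
    using multiset_filter_mono[OF sub, of "\<lambda>f. \<not> ?ip (fsym f)"] lin_lin[of ?ip l']
    unfolding lin_part_def by simp
  have sub1: "lin_part per (CC E l') \<subseteq># So"
  proof -
    have "lin_part per (CC E l') = CC E (lin_part ?ip l')" by (rule lin_CC)
    also have "\<dots> \<subseteq># CC E (lin_part ?ip S)" unfolding CC_def by (rule image_mset_subseteq_mono[OF ll])
    also have "\<dots> = lin_part per So" using lS by simp
    also have "\<dots> \<subseteq># So" unfolding lin_part_def by simp
    finally show ?thesis .
  qed
  have psub1: "set_mset (per_part per (CC E l')) \<subseteq> set_mset So"
  proof -
    have "set_mset (per_part ?ip l') \<subseteq> set_mset (per_part ?ip S)"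
      using psub unfolding per_part_def by auto
    then have "set_mset (CC E (per_part ?ip l')) \<subseteq> set_mset (CC E (per_part ?ip S))"
      unfolding CC_def by auto
    also have "\<dots> = set_mset (per_part per So)" using pS by simp
    also have "\<dots> \<subseteq> set_mset So" unfolding per_part_def by auto
    finally show ?thesis by (simp add: per_CC)
  qed
  have step: "msr_step per E RO So (image_mset unbuf a') (So - lin_part per (CC E l') + CC E r')"
    unfolding msr_step_def
    using r0 gi ground_CC[OF gl] ground_unbuf[OF ga] ground_CC[OF gr] el0 ea0 er0 sub1 psub1 by blast
  have lin_new: "lin_part per (So - lin_part per (CC E l') + CC E r')
      = CC E (lin_part ?ip (S - lin_part ?ip l' + r'))"
  proof -
    have "lin_part per (So - lin_part per (CC E l') + CC E r')
        = CC E (lin_part ?ip S) - CC E (lin_part ?ip l') + CC E (lin_part ?ip r')"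
      by (simp add: lin_plus lin_minus lin_lin lS lin_CC)
    also have "\<dots> = CC E (lin_part ?ip S - lin_part ?ip l' + lin_part ?ip r')"
      unfolding CC_def by (simp add: image_mset_Diff[OF ll])
    also have "\<dots> = CC E (lin_part ?ip (S - lin_part ?ip l' + r'))"
      by (simp add: lin_plus lin_minus lin_lin)
    finally show ?thesis .
  qed
  have per_new: "set_mset (per_part per (So - lin_part per (CC E l') + CC E r'))
      = set_mset (CC E (per_part ?ip (S - lin_part ?ip l' + r')))"
  proof -
    have "set_mset (per_part per (So - lin_part per (CC E l') + CC E r'))
        = set_mset (per_part per So) \<union> set_mset (CC E (per_part ?ip r'))"
      by (simp add: per_plus per_minus per_lin per_CC)
    also have "\<dots> = set_mset (CC E (per_part ?ip S)) \<union> set_mset (CC E (per_part ?ip r'))"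
      using pS by simp
    also have "\<dots> = set_mset (CC E (per_part ?ip (S - lin_part ?ip l' + r')))"
      by (simp add: per_plus per_minus per_lin CC_def)
    finally show ?thesis .
  qed
  have gS': "ground_mset (S - lin_part ?ip l' + r')"
    using gS gr unfolding ground_mset_def by (auto dest: in_diffD)
  show ?thesis using step lift lin_new per_new gS' by (simp add: Rel_def)
qed


lemma sim_io:
  fixes per :: "'s \<Rightarrow> bool"
  assumes l: "l' = {#f#}" and r: "r' = {#g#}" and e: "eqE_fact E (unbuf f) (unbuf g)"
    and gr: "ground_mset r'"
    and sub: "lin_part (ipersistent per) l' \<subseteq># S"
    and psub: "set_mset (per_part (ipersistent per) l') \<subseteq> set_mset S"
    and rel: "Rel per E S So"
  shows "Rel per E (S - lin_part (ipersistent per) l' + r') So"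
proof -
  let ?ip = "ipersistent per"
  have lS: "lin_part per So = CC E (lin_part ?ip S)" and pS: "set_mset (per_part per So) = set_mset (CC E (per_part ?ip S))"
    and gS: "ground_mset S" using rel by (auto simp: Rel_def)
  have fS: "f \<in># S" using sub psub l by (auto simp: lin_part_def per_part_def split: if_splits)
  then have gf: "ground_fact f" using gS by (auto simp: ground_mset_def)
  have c: "canon E (unbuf f) = canon E (unbuf g)"
    by (rule canon_cong[OF e unbuf_ground[OF gf]])
  have pe: "?ip (fsym f) = ?ip (fsym g)"
    using e ip_unbuf[of per f] ip_unbuf[of per g] by (simp add: eqE_fact_def)
  have gS': "ground_mset (S - lin_part ?ip l' + r')"
    using gS gr unfolding ground_mset_def by (auto dest: in_diffD)
  show ?thesis
  proof (cases "?ip (fsym f)")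
    case False
    then have ll: "lin_part ?ip l' = {#f#}" "lin_part ?ip r' = {#g#}" "per_part ?ip l' = {#}" "per_part ?ip r' = {#}"
      "lin_part ?ip {#f#} = {#f#}" "per_part ?ip {#f#} = {#}"
      using l r pe by (auto simp: lin_part_def per_part_def)
    have fl: "f \<in># lin_part ?ip S" using fS False by (simp add: lin_part_def)
    have "CC E (lin_part ?ip (S - lin_part ?ip l' + r')) = CC E (lin_part ?ip S - {#f#} + {#g#})"
      by (simp add: lin_plus lin_minus lin_lin ll)
    also have "\<dots> = CC E (lin_part ?ip S) - {#canon E (unbuf f)#} + {#canon E (unbuf g)#}"
      unfolding CC_def using fl by (simp add: image_mset_Diff)
    also have "\<dots> = CC E (lin_part ?ip S)"
    proof -
      have "canon E (unbuf g) \<in># CC E (lin_part ?ip S)" using fl c unfolding CC_def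
        by (metis comp_apply image_eqI set_image_mset)
      then show ?thesis using c by (simp add: insert_DiffM)
    qed
    finally have L: "CC E (lin_part ?ip (S - lin_part ?ip l' + r')) = lin_part per So" using lS by simp
    have P: "per_part ?ip (S - lin_part ?ip l' + r') = per_part ?ip S"
      by (simp add: per_plus per_minus per_lin ll)
    show ?thesis using L P pS gS' by (simp add: Rel_def)
  next
    case True
    then have ll: "lin_part ?ip l' = {#}" "lin_part ?ip r' = {#}" "per_part ?ip r' = {#g#}"
      using l r pe by (auto simp: lin_part_def per_part_def)
    have fp: "f \<in># per_part ?ip S" using fS True by (simp add: per_part_def)
    have L: "lin_part ?ip (S - lin_part ?ip l' + r') = lin_part ?ip S"
      by (simp add: lin_plus ll)
    have "set_mset (CC E (per_part ?ip (S - lin_part ?ip l' + r')))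
        = set_mset (CC E (per_part ?ip S)) \<union> {canon E (unbuf g)}"
      by (simp add: per_plus ll CC_def)
    also have "\<dots> = set_mset (CC E (per_part ?ip S))"
    proof -
      have "canon E (unbuf g) \<in># CC E (per_part ?ip S)" using fp c unfolding CC_def
        by (metis comp_apply image_eqI set_image_mset)
      then show ?thesis by blast
    qed
    finally show ?thesis using L lS pS gS' by (simp add: Rel_def)
  qed
qed


lemma pf_parts:
  assumes pf: "protocol_format \<Sigma> n Renv Rrole"
  shows "\<forall>i\<in>{1..n}. Senv \<Sigma> \<inter> Sstate \<Sigma> i = {}" "Sact \<Sigma> \<inter> Senv \<Sigma> = {}" "Sin \<Sigma> \<subseteq> Senv \<Sigma>" "Sout \<Sigma> \<subseteq> Senv \<Sigma>" "symFr \<Sigma> \<in> Sin \<Sigma>"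
 "\<forall>r\<in>Renv \<union> (\<Union>i\<in>{1..n}. Rrole i). \<not> is_fresh_rule (symFr \<Sigma>) r \<longrightarrow> syms (acts r) \<subseteq> Sact \<Sigma>"
 "\<forall>i\<in>{1..n}. \<forall>r\<in>Rrole i. \<exists>f\<in>#concs r. fsym f \<in> Sstate \<Sigma> i"
proof -
  note c3 = pf[unfolded protocol_format_def, THEN conjunct2, THEN conjunct2, THEN conjunct1]
  note c26 = pf[unfolded protocol_format_def, THEN conjunct2, THEN conjunct2, THEN conjunct2, THEN conjunct2, THEN conjunct2, THEN conjunct2, THEN conjunct2, THEN conjunct2, THEN conjunct2, THEN conjunct2, THEN conjunct2, THEN conjunct2, THEN conjunct2, THEN conjunct2, THEN conjunct2, THEN conjunct2, THEN conjunct2, THEN conjunct2, THEN conjunct2, THEN conjunct2, THEN conjunct2, THEN conjunct2, THEN conjunct2, THEN conjunct2, THEN conjunct2]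
  show "\<forall>i\<in>{1..n}. Senv \<Sigma> \<inter> Sstate \<Sigma> i = {}" using c3 by blast
  show "Sact \<Sigma> \<inter> Senv \<Sigma> = {}" by (rule pf[unfolded protocol_format_def, THEN conjunct2, THEN conjunct1])
  show "Sin \<Sigma> \<subseteq> Senv \<Sigma>" by (rule pf[unfolded protocol_format_def, THEN conjunct2, THEN conjunct2, THEN conjunct2, THEN conjunct2, THEN conjunct1])
  show "Sout \<Sigma> \<subseteq> Senv \<Sigma>" by (rule pf[unfolded protocol_format_def, THEN conjunct2, THEN conjunct2, THEN conjunct2, THEN conjunct2, THEN conjunct2, THEN conjunct1])
  show "symFr \<Sigma> \<in> Sin \<Sigma>" by (rule pf[unfolded protocol_format_def, THEN conjunct2, THEN conjunct2, THEN conjunct2, THEN conjunct2, THEN conjunct2, THEN conjunct2, THEN conjunct2, THEN conjunct1])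
  show "\<forall>r\<in>Renv \<union> (\<Union>i\<in>{1..n}. Rrole i). \<not> is_fresh_rule (symFr \<Sigma>) r \<longrightarrow> syms (acts r) \<subseteq> Sact \<Sigma>" by (rule pf[unfolded protocol_format_def, THEN conjunct2, THEN conjunct2, THEN conjunct2, THEN conjunct2, THEN conjunct2, THEN conjunct2, THEN conjunct2, THEN conjunct2, THEN conjunct2, THEN conjunct2, THEN conjunct2, THEN conjunct2, THEN conjunct2, THEN conjunct2, THEN conjunct2, THEN conjunct2, THEN conjunct2, THEN conjunct2, THEN conjunct2, THEN conjunct2, THEN conjunct2, THEN conjunct2, THEN conjunct1])
  show "\<forall>i\<in>{1..n}. \<forall>r\<in>Rrole i. \<exists>f\<in>#concs r. fsym f \<in> Sstate \<Sigma> i"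
  proof (intro ballI)
    fix i r assume i: "i \<in> {1..n}" and r: "r \<in> Rrole i"
    show "\<exists>f\<in>#concs r. fsym f \<in> Sstate \<Sigma> i"
      using bspec[OF c26 i] apply -
      apply (elim exE conjE)
      apply (drule bspec[OF _ r])
      apply (elim conjE)
      apply assumption
      done
  qed
qed

lemma role_acts:
  assumes pf: "protocol_format \<Sigma> n Renv Rrole" and i: "i \<in> {1..n}" and r0: "r0 \<in> Rrole i"
  shows "acts (buf_rule \<Sigma> n i r0) = image_mset lift_fact (acts r0)"
proof -
  note P = pf_parts[OF pf]
  have ns: "\<exists>f\<in>#concs r0. fsym f \<in> Sstate \<Sigma> i"
    using P(7) i r0 by blast
  have disj: "Senv \<Sigma> \<inter> Sstate \<Sigma> i = {}"
    using P(1) i by blast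
  have FrIn: "symFr \<Sigma> \<in> Senv \<Sigma>" using P(3,5) by blast
  have nf: "\<not> is_fresh_rule (symFr \<Sigma>) r0"
  proof
    assume "is_fresh_rule (symFr \<Sigma>) r0"
    then obtain x where "r0 = fresh_rule (symFr \<Sigma>) x" by (auto simp: is_fresh_rule_def)
    then show False using ns disj FrIn by (auto simp: fresh_rule_def)
  qed
  have "r0 \<in> Renv \<union> (\<Union>i\<in>{1..n}. Rrole i)" using i r0 by blast
  then have "syms (acts r0) \<subseteq> Sact \<Sigma>"
    using P(6) nf by blast
  moreover have "Sact \<Sigma> \<inter> (Sin_minus \<Sigma> n \<union> Sout \<Sigma>) = {}"
    using P(2,3,4) unfolding Sin_minus_def by blast
  ultimately have "\<forall>f\<in>#acts r0. fsym f \<notin> Sin_minus \<Sigma> n \<union> Sout \<Sigma>"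
    unfolding syms_def by blast
  then show ?thesis unfolding buf_rule_def Let_def buf_fact_def
    by (auto intro: image_mset_cong)
qed

lemma rule_cases:
  assumes pf: "protocol_format \<Sigma> n Renv Rrole" and r: "r \<in> R_intf \<Sigma> n Renv Rrole"
  shows "(\<exists>r0 h. r0 \<in> R_orig n Renv Rrole \<and> good h \<and> prems r = image_mset h (prems r0)
            \<and> concs r = image_mset h (concs r0) \<and> acts r = image_mset lift_fact (acts r0))
         \<or> (\<exists>i. r \<in> io_rules \<Sigma> n i)"
proof -
  have lift_case: ?thesis if "r = lift_rule r0" "r0 \<in> Renv" for r0
    using that good_lift by (auto simp: R_orig_def lift_rule_def)
  show ?thesis
    using r unfolding R_intf_def R_io_def
  proof (elim UnE)
    assume "r \<in> lift_rule ` (Renv - setup_rules \<Sigma> n Renv)"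
    then show ?thesis using lift_case by blast
  next
    assume "r \<in> (\<Union>i\<in>{1..n}. io_rules \<Sigma> n i)"
    then show ?thesis by blast
  next
    assume "r \<in> lift_rule ` setup_rules \<Sigma> n Renv"
    then show ?thesis using lift_case by (auto simp: setup_rules_def)
  next
    assume "r \<in> (\<Union>i\<in>{1..n}. Rrole_intf \<Sigma> n Rrole i)"
    then obtain i r0 where i: "i \<in> {1..n}" and r0: "r0 \<in> Rrole i" and rr: "r = buf_rule \<Sigma> n i r0"
      by (auto simp: Rrole_intf_def)
    have "r0 \<in> R_orig n Renv Rrole" using i r0 by (auto simp: R_orig_def)
    moreover have "acts r = image_mset lift_fact (acts r0)" using role_acts[OF pf i r0] rr by simp
    moreover have "prems r = image_mset (buf_fact \<Sigma> n i (thread_id \<Sigma> i r0)) (prems r0)"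
      "concs r = image_mset (buf_fact \<Sigma> n i (thread_id \<Sigma> i r0)) (concs r0)"
      using rr unfolding buf_rule_def Let_def by simp_all
    ultimately show ?thesis using good_buf[of \<Sigma> n i "thread_id \<Sigma> i r0"] by blast
  qed
qed

lemma single_rel: "eqE_mset E l' {#x#} \<Longrightarrow> \<exists>f. l' = {#f#} \<and> eqE_fact E f x"
  unfolding eqE_mset_def by (drule msed_rel_invR) auto


lemma io_pair:
  assumes r: "r \<in> io_rules \<Sigma> n i"
    and el: "eqE_mset E l' (subst_mset \<theta> (prems r))"
    and ea: "eqE_mset E a' (subst_mset \<theta> (acts r))"
    and er: "eqE_mset E r' (subst_mset \<theta> (concs r))"
  shows "a' = {#} \<and> (\<exists>f g. l' = {#f#} \<and> r' = {#g#} \<and> eqE_fact E (unbuf f) (unbuf g))"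
proof -
  have key: "\<exists>f g. l' = {#f#} \<and> r' = {#g#} \<and> eqE_fact E (unbuf f) (unbuf g)"
    if p: "prems r = {#p#}" and c: "concs r = {#q#}"
      and u: "unbuf (subst_fact \<theta> p) = unbuf (subst_fact \<theta> q)" for p q
  proof -
    obtain f where f: "l' = {#f#}" "eqE_fact E f (subst_fact \<theta> p)"
      using single_rel[of E l'] el p by (auto simp: subst_mset_def)
    obtain g where g: "r' = {#g#}" "eqE_fact E g (subst_fact \<theta> q)"
      using single_rel[of E r'] er c by (auto simp: subst_mset_def)
    have "eqE_fact E (unbuf f) (unbuf (subst_fact \<theta> p))" using f(2) by (rule unbuf_eqE)
    moreover have "eqE_fact E (unbuf g) (unbuf (subst_fact \<theta> q))" using g(2) by (rule unbuf_eqE)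
    ultimately have "eqE_fact E (unbuf f) (unbuf g)" using u eqE_fact_trans eqE_fact_sym by metis
    then show ?thesis using f g by blast
  qed
  have "acts r = {#}" using r by (auto simp: io_rules_def)
  then have a: "a' = {#}" using ea by (simp add: subst_mset_def eqE_mset_def)
  from r show ?thesis
    unfolding io_rules_def
  proof (elim UnE CollectE exE conjE)
    fix F xs rid
    assume "r = Rule {#Fact (Base F) (map (Var SMsg) xs)#} {#} {#Fact (Buf F i) (Var SFresh rid # map (Var SMsg) xs)#}"
    then show ?thesis using a key[of "Fact (Base F) (map (Var SMsg) xs)" "Fact (Buf F i) (Var SFresh rid # map (Var SMsg) xs)"]
      by (simp add: unbuf_def subst_fact_def)
  next
    fix G xs rid
    assume "r = Rule {#Fact (Buf G i) (Var SFresh rid # map (Var SMsg) xs)#} {#} {#Fact (Base G) (map (Var SMsg) xs)#}"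
    then show ?thesis using a key[of "Fact (Buf G i) (Var SFresh rid # map (Var SMsg) xs)" "Fact (Base G) (map (Var SMsg) xs)"]
      by (simp add: unbuf_def subst_fact_def)
  qed
qed

lemma sim_run:
  assumes pf: "protocol_format \<Sigma> n Renv Rrole"
    and run: "msr_run (ipersistent (persistent \<Sigma>)) E (R_intf \<Sigma> n Renv Rrole) S tr"
  shows "\<exists>So tro. msr_run (persistent \<Sigma>) E (R_orig n Renv Rrole) So tro \<and> Rel (persistent \<Sigma>) E S So
     \<and> filter (\<lambda>a. a \<noteq> {#}) tr = map (image_mset lift_fact) (filter (\<lambda>a. a \<noteq> {#}) tro)"
  using run
proof (induction rule: msr_run.induct)
  case run_empty
  have "Rel (persistent \<Sigma>) E {#} {#}" by (simp add: Rel_def CC_def lin_part_def per_part_def ground_mset_def)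
  then show ?case using msr_run.run_empty by fastforce
next
  case (run_step S tr a S')
  obtain So tro where IH: "msr_run (persistent \<Sigma>) E (R_orig n Renv Rrole) So tro"
    "Rel (persistent \<Sigma>) E S So"
    "filter (\<lambda>a. a \<noteq> {#}) tr = map (image_mset lift_fact) (filter (\<lambda>a. a \<noteq> {#}) tro)"
    using run_step.IH by blast
  from run_step.hyps(2) obtain r \<theta> l' r' where
    r: "r \<in> R_intf \<Sigma> n Renv Rrole" and gi: "ground_inst \<theta>" and gl: "ground_mset l'"
    and ga: "ground_mset a" and gr: "ground_mset r'"
    and el: "eqE_mset E l' (subst_mset \<theta> (prems r))"
    and ea: "eqE_mset E a (subst_mset \<theta> (acts r))"
    and er: "eqE_mset E r' (subst_mset \<theta> (concs r))"
    and sub: "lin_part (ipersistent (persistent \<Sigma>)) l' \<subseteq># S"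
    and psub: "set_mset (per_part (ipersistent (persistent \<Sigma>)) l') \<subseteq> set_mset S"
    and S': "S' = S - lin_part (ipersistent (persistent \<Sigma>)) l' + r'"
    unfolding msr_step_def by blast
  from rule_cases[OF pf r] show ?case
  proof (elim disjE exE conjE)
    fix r0 h
    assume r0: "r0 \<in> R_orig n Renv Rrole" and gh: "good h"
      and pr: "prems r = image_mset h (prems r0)" and cr: "concs r = image_mset h (concs r0)"
      and ar: "acts r = image_mset lift_fact (acts r0)"
    note sr = sim_rule[OF r0 gh pr cr ar gi gl ga gr el ea er sub psub IH(2)]
    let ?So' = "So - lin_part (persistent \<Sigma>) (CC E l') + CC E r'"
    have run': "msr_run (persistent \<Sigma>) E (R_orig n Renv Rrole) ?So' (tro @ [image_mset unbuf a])"
      using msr_run.run_step[OF IH(1)] sr by blast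
    have "filter (\<lambda>a. a \<noteq> {#}) (tr @ [a]) = map (image_mset lift_fact) (filter (\<lambda>a. a \<noteq> {#}) (tro @ [image_mset unbuf a]))"
      using IH(3) sr by auto
    then show ?case using run' sr S' by blast
  next
    fix i
    assume "r \<in> io_rules \<Sigma> n i"
    from io_pair[OF this el ea er] obtain f g where a: "a = {#}" and fg: "l' = {#f#}" "r' = {#g#}"
      "eqE_fact E (unbuf f) (unbuf g)" by blast
    have "Rel (persistent \<Sigma>) E S' So"
      using sim_io[OF fg gr sub psub IH(2)] S' by simp
    then show ?case using IH(1,3) a by auto
  qed
qed


theorem lemma1:
  fixes \<Sigma> :: "'s fsig" and n :: nat
    and Renv :: "('s,'f,'n,'v) rule set" and Rrole :: "nat \<Rightarrow> ('s,'f,'n,'v) rule set"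
    and E :: "(('f,'n,'v) trm \<times> ('f,'n,'v) trm) set"
  assumes "protocol_format \<Sigma> n Renv Rrole"
  shows "Tr' (ipersistent (persistent \<Sigma>)) E (R_intf \<Sigma> n Renv Rrole)
           \<subseteq> map (image_mset lift_fact) ` Tr' (persistent \<Sigma>) E (R_orig n Renv Rrole)"
proof
  fix x assume "x \<in> Tr' (ipersistent (persistent \<Sigma>)) E (R_intf \<Sigma> n Renv Rrole)"
  then obtain tr S where x: "x = filter (\<lambda>a. a \<noteq> {#}) tr"
    and run: "msr_run (ipersistent (persistent \<Sigma>)) E (R_intf \<Sigma> n Renv Rrole) S tr"
    by (auto simp: Tr'_def Tr_def)
  from sim_run[OF assms run] obtain So tro where
    "msr_run (persistent \<Sigma>) E (R_orig n Renv Rrole) So tro"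
    "filter (\<lambda>a. a \<noteq> {#}) tr = map (image_mset lift_fact) (filter (\<lambda>a. a \<noteq> {#}) tro)" by blast
  then show "x \<in> map (image_mset lift_fact) ` Tr' (persistent \<Sigma>) E (R_orig n Renv Rrole)"
    using x by (auto simp: Tr'_def Tr_def)
qed

end
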